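(* Let $G_0$ and $G_1$ be continuous cumulative distribution functions on $\mathbb{R}$ with densities, and for $\epsilon\in(0,1)$ consider the hypotheses $H_0: X_i\overset{\text{i.i.d.}}{\sim}G_0$ versus $H_1: X_i\overset{\text{i.i.d.}}{\sim}\epsilon G_1+(1-\epsilon)G_0$. Let $F_0=G_0$, $F_1=(1-\epsilon)G_0+\epsilon G_1$, $\bar F_j=1-F_j$, and $D_\epsilon(x)=\bar F_1(\bar F_0^{-1}(x))$ for $x\in[0,1]$. For $\tau_1\in(0,1]$, $\tau_2>0$ define \[ E_0=\tau_1(1-\log\tau_1+\log\tau_2),\qquad V_0=\tau_1\bigl(1+(1-\tau_1)(1-\log\tau_1+\log\tau_2)^2\bigr), \] \[ E_1=\int_0^{\tau_1}-\log\!\Big(\frac{u}{\tau_2}\Big)D_\epsilon'(u)\,du,\qquad c_\epsilon(\tau_1,\tau_2)=\frac{(E_1-E_0)^2}{V_0}. \] Then the maximizers $(\tau_1^*,\tau_2^* )$ of $c_\epsilon$ over $(0,1]\times(0,\infty)$ do not depend on $\epsilon$: for any $\epsilon,\epsilon'\in(0,1)$, the set of maximizers of $c_\epsilon$ equals the set of maximizers of $c_{\epsilon'}$.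
   Context: Input $p$-values are $P_i=\bar F_0(X_i)$, and the TFisher statistic is $W_n(\tau_1,\tau_2)=\sum_{i=1}^n\bigl(-2\log P_i+2\log\tau_2\bigr)I(P_i\le\tau_1)$; $c_\epsilon(\tau_1,\tau_2)$ is its Bahadur efficiency under the stated mixture alternative (with the parameters of $G_1$ held fixed). *)

theory Defs
  imports "HOL-Analysis.Analysis"
begin

definition cdf_with_density :: "(real \<Rightarrow> real) \<Rightarrow> bool" where
  "cdf_with_density G \<longleftrightarrow> continuous_on UNIV G \<and>
     (\<exists>g. g \<in> borel_measurable borel \<and> (\<forall>x. 0 \<le> g x) \<and> integrable lborel g \<and>
          integral\<^sup>L lborel g = 1 \<and> (\<forall>x. G x = (\<integral>t\<in>{..x}. g t \<partial>lborel)))"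

definition Fbar0 :: "(real \<Rightarrow> real) \<Rightarrow> real \<Rightarrow> real" where
  "Fbar0 G0 t = 1 - G0 t"

definition Fbar1 :: "real \<Rightarrow> (real \<Rightarrow> real) \<Rightarrow> (real \<Rightarrow> real) \<Rightarrow> real \<Rightarrow> real" where
  "Fbar1 eps G0 G1 t = 1 - ((1 - eps) * G0 t + eps * G1 t)"

definition Fbar0_inv :: "(real \<Rightarrow> real) \<Rightarrow> real \<Rightarrow> real" where
  "Fbar0_inv G0 x = Inf {t. Fbar0 G0 t \<le> x}"

definition Dfun :: "real \<Rightarrow> (real \<Rightarrow> real) \<Rightarrow> (real \<Rightarrow> real) \<Rightarrow> real \<Rightarrow> real" where
  "Dfun eps G0 G1 x = Fbar1 eps G0 G1 (Fbar0_inv G0 x)"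

definition E0 :: "real \<Rightarrow> real \<Rightarrow> real" where
  "E0 t1 t2 = t1 * (1 - ln t1 + ln t2)"

definition V0 :: "real \<Rightarrow> real \<Rightarrow> real" where
  "V0 t1 t2 = t1 * (1 + (1 - t1) * (1 - ln t1 + ln t2)\<^sup>2)"

definition E1 :: "real \<Rightarrow> (real \<Rightarrow> real) \<Rightarrow> (real \<Rightarrow> real) \<Rightarrow> real \<Rightarrow> real \<Rightarrow> real" where
  "E1 eps G0 G1 t1 t2 = integral {0..t1} (\<lambda>u. - ln (u / t2) * deriv (Dfun eps G0 G1) u)"

definition c_eff :: "real \<Rightarrow> (real \<Rightarrow> real) \<Rightarrow> (real \<Rightarrow> real) \<Rightarrow> real \<Rightarrow> real \<Rightarrow> real" where
  "c_eff eps G0 G1 t1 t2 = (E1 eps G0 G1 t1 t2 - E0 t1 t2)\<^sup>2 / V0 t1 t2"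

definition maximizers :: "real \<Rightarrow> (real \<Rightarrow> real) \<Rightarrow> (real \<Rightarrow> real) \<Rightarrow> (real \<times> real) set" where
  "maximizers eps G0 G1 = {(t1, t2). t1 \<in> {0<..1} \<and> 0 < t2 \<and>
      (\<forall>s1 s2. s1 \<in> {0<..1} \<and> 0 < s2 \<longrightarrow> c_eff eps G0 G1 s1 s2 \<le> c_eff eps G0 G1 t1 t2)}"

end

theory Submission
  imports Defs "HOL-Real_Asymp.Real_Asymp"
begin


definition incr :: "(real \<Rightarrow> real) \<Rightarrow> real \<times> real \<Rightarrow> real" where
  "incr f i = f (fst i + snd i) - f (fst i - snd i)"

definition cb :: "real \<times> real \<Rightarrow> real set" where
  "cb i = cball (fst i) (snd i)"

lemma cb_eq: "cb i = {fst i - snd i .. fst i + snd i}"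
  by (simp add: cb_def cball_eq_atLeastAtMost)

lemma sum_incr_le:
  assumes f: "mono f" and S: "finite S"
  shows "(\<forall>i\<in>S. 0 < snd i) \<longrightarrow> pairwise (\<lambda>i j. disjnt (cb i) (cb j)) S \<longrightarrow> A \<le> B \<longrightarrow>
     (\<forall>i\<in>S. cb i \<subseteq> {A..B}) \<longrightarrow> (\<Sum>i\<in>S. incr f i) \<le> f B - f A"
  using S
proof (induction S arbitrary: B rule: finite_ranking_induct[where f = "\<lambda>i. fst i - snd i"])
  case empty
  then show ?case using f by (auto simp: mono_def)
next
  case (insert x S)
  show ?case
  proof (intro impI)
    assume pos: "\<forall>i\<in>insert x S. 0 < snd i"
      and pw: "pairwise (\<lambda>i j. disjnt (cb i) (cb j)) (insert x S)"
      and AB: "A \<le> B" and sub: "\<forall>i\<in>insert x S. cb i \<subseteq> {A..B}"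
    show "(\<Sum>i\<in>insert x S. incr f i) \<le> f B - f A"
    proof (cases "x \<in> S")
      case True
      then have "insert x S = S" by auto
      then show ?thesis using insert pos pw AB sub by simp
    next
      case False
      have xsub: "{fst x - snd x .. fst x + snd x} \<subseteq> {A..B}" using sub by (auto simp: cb_eq)
      have px: "0 < snd x" using pos by auto
      have Ax: "A \<le> fst x - snd x" and xB: "fst x + snd x \<le> B" using xsub px by auto
      have subS: "\<forall>i\<in>S. cb i \<subseteq> {A..fst x - snd x}"
      proof
        fix i assume iS: "i \<in> S"
        have ix: "i \<noteq> x" using iS False by auto
        have "disjnt (cb i) (cb x)" using pw iS ix by (auto simp: pairwise_def)
        moreover have "fst i - snd i \<le> fst x - snd x" using insert.hyps(2) iS by auto
        moreover have "0 < snd i" using pos iS by auto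
        ultimately have "fst i + snd i < fst x - snd x"
          using px by (auto simp: disjnt_def cb_eq)
        then show "cb i \<subseteq> {A..fst x - snd x}" using sub iS by (auto simp: cb_eq)
      qed
      have "(\<Sum>i\<in>S. incr f i) \<le> f (fst x - snd x) - f A"
        using insert.IH[of "fst x - snd x"] pos pw Ax subS by (auto simp: pairwise_insert)
      moreover have "f (fst x + snd x) \<le> f B" using f xB by (auto simp: mono_def)
      ultimately show ?thesis using False insert.hyps(1) by (simp add: incr_def)
    qed
  qed
qed

lemma measure_cb: "0 < snd i \<Longrightarrow> measure lebesgue (cb i) = 2 * snd i"
  by (simp add: cb_eq)

lemma measure_Union_cb:
  assumes "finite F" "\<forall>i\<in>F. 0 < snd i" "pairwise (\<lambda>i j. disjnt (cb i) (cb j)) F"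
  shows "measure lebesgue (\<Union>(cb ` F)) = (\<Sum>i\<in>F. 2 * snd i)"
proof -
  have "measure lebesgue (\<Union>(cb ` F)) = (\<Sum>i\<in>F. measure lebesgue (cb i))"
    by (rule measure_negligible_finite_Union_image)
       (use assms in \<open>auto simp: cb_def pairwise_def disjnt_def\<close>)
  also have "\<dots> = (\<Sum>i\<in>F. 2 * snd i)" using assms(2) by (intro sum.cong) (auto simp: measure_cb)
  finally show ?thesis .
qed

lemma lmeasurable_Union_cb:
  assumes "countable C" "U \<in> lmeasurable" "\<forall>i\<in>C. cb i \<subseteq> U"
  shows "\<Union>(cb ` C) \<in> lmeasurable"
proof (rule fmeasurableI2[OF assms(2)])
  show "\<Union>(cb ` C) \<subseteq> U" using assms by auto
  show "\<Union>(cb ` C) \<in> sets lebesgue"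
    using assms(1) by (intro sets.countable_UN') (auto simp: cb_def)
qed

lemma vitali_step2:
  fixes f :: "real \<Rightarrow> real"
  assumes f: "mono f" and q: "0 < q"
  and C: "countable C" "\<forall>i\<in>C. 0 < snd i" "pairwise (\<lambda>i j. disjnt (cb i) (cb j)) C"
  and U: "U \<in> lmeasurable" "\<forall>i\<in>C. cb i \<subseteq> U"
  and E: "\<forall>y\<in>E. \<forall>d>0. \<exists>k. 0<k \<and> k<d \<and> q * k \<le> f (y+k) - f y"
  and e: "0 < e"
  obtains T F where "T \<in> lmeasurable" "E \<inter> (\<Union>i\<in>C. ball (fst i) (snd i)) \<subseteq> T" "finite F" "F \<subseteq> C"
      "q * (measure lebesgue T - e) \<le> (\<Sum>i\<in>F. incr f i)"
proof -
  define E' where "E' = E \<inter> (\<Union>i\<in>C. ball (fst i) (snd i))"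
  define K' where "K' = {j. 0 < snd j \<and> (\<exists>i\<in>C. cb j \<subseteq> cb i) \<and> q * (2* snd j) \<le> incr f j}"
  have cov: "\<exists>j. j \<in> K' \<and> x \<in> cball (fst j) (snd j) \<and> snd j < d" if x: "x \<in> E'" and d: "0 < d" for x d
  proof -
    obtain i where i: "i \<in> C" "x \<in> ball (fst i) (snd i)" using x by (auto simp: E'_def)
    define \<rho> where "\<rho> = snd i - \<bar>x - fst i\<bar>"
    have \<rho>: "0 < \<rho>" using i by (auto simp: \<rho>_def dist_real_def)
    obtain k where k: "0 < k" "k < min d \<rho>" "q * k \<le> f (x+k) - f x"
      using E x \<rho> d by (auto simp: E'_def) (metis min_less_iff_conj)
    define j where "j = (x + k/2, k/2)"
    have "cb j \<subseteq> cb i" using k by (auto simp: cb_eq j_def \<rho>_def)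
    moreover have "q * (2* snd j) \<le> incr f j" using k by (simp add: j_def incr_def add.commute)
    ultimately have "j \<in> K'" using k i by (auto simp: K'_def j_def)
    moreover have "x \<in> cball (fst j) (snd j)" using k by (simp add: j_def dist_real_def)
    moreover have "snd j < d" using k by (simp add: j_def)
    ultimately show ?thesis by blast
  qed
  obtain C' where C': "countable C'" "C' \<subseteq> K'"
     "pairwise (\<lambda>i j. disjnt (cball (fst i) (snd i)) (cball (fst j) (snd j))) C'"
     "negligible(E' - (\<Union>i \<in> C'. cball (fst i) (snd i)))"
    using Vitali_covering_theorem_cballs[of K' snd E' fst] cov by (auto simp: K'_def)
  have C'pw: "pairwise (\<lambda>i j. disjnt (cb i) (cb j)) C'" using C'(3) by (simp add: cb_def)
  have C'pos: "\<forall>j\<in>C'. 0 < snd j" using C'(2) by (auto simp: K'_def)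
  have C'U: "\<forall>j\<in>C'. cb j \<subseteq> U" using C'(2) U(2) by (auto simp: K'_def)
  define W where "W = \<Union>(cb ` C')"
  have W: "W \<in> lmeasurable" unfolding W_def by (rule lmeasurable_Union_cb[OF C'(1) U(1) C'U])
  define T where "T = W \<union> (E' - W)"
  have negEW: "negligible (E' - W)" using C'(4) by (simp add: W_def cb_def)
  have T: "T \<in> lmeasurable" 
    by (rule lmeasurable_negligible_symdiff[OF W]) (auto simp: T_def intro: negligible_subset[OF negEW])
  have mT: "measure lebesgue T = measure lebesgue W"
    by (rule measure_negligible_symdiff[OF W]) (auto simp: T_def intro: negligible_subset[OF negEW])
  have ET: "E' \<subseteq> T" by (auto simp: T_def)
  obtain D' where D': "D' \<subseteq> cb ` C'" "finite D'" "measure lebesgue W - e < measure lebesgue (\<Union>D')"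
  proof (rule measure_countable_Union_approachable[of "cb ` C'" e "measure lebesgue U"])
    show "countable (cb ` C')" using C'(1) by simp
    show "0 < e" by (rule e)
    show "d \<in> lmeasurable" if "d \<in> cb ` C'" for d using that by (auto simp: cb_def)
    show "measure lebesgue (\<Union>D') \<le> measure lebesgue U" if "D' \<subseteq> cb ` C'" "finite D'" for D'
    proof (rule measure_mono_fmeasurable)
      show "\<Union>D' \<subseteq> U" using that C'U by auto
      show "\<Union>D' \<in> sets lebesgue" using that
        by (intro sets.finite_Union) (auto simp: cb_def intro!: fmeasurableD)
    qed (use U in auto)
  qed (auto simp: W_def)
  obtain F' where F': "F' \<subseteq> C'" "finite F'" "D' = cb ` F'" using finite_subset_image[OF D'(2) D'(1)] by blast
  define \<sigma> where "\<sigma> j = (SOME i. i \<in> C \<and> cb j \<subseteq> cb i)" for j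
  have \<sigma>: "\<sigma> j \<in> C \<and> cb j \<subseteq> cb (\<sigma> j)" if "j \<in> C'" for j
  proof -
    have "\<exists>i. i \<in> C \<and> cb j \<subseteq> cb i" using that C'(2) unfolding K'_def by blast
    then show ?thesis unfolding \<sigma>_def by (rule someI_ex)
  qed
  define F where "F = \<sigma> ` F'"
  have F: "finite F" "F \<subseteq> C" using F' \<sigma> by (auto simp: F_def)
  have F'pos: "\<forall>j\<in>F'. 0 < snd j" using C'pos F' by auto
  have F'pw: "pairwise (\<lambda>i j. disjnt (cb i) (cb j)) F'" using C'pw F'(1) pairwise_subset by blast
  have "q * (measure lebesgue T - e) \<le> q * measure lebesgue (\<Union>D')"
    using D'(3) q mT by simp
  also have "\<dots> = q * (\<Sum>j\<in>F'. 2 * snd j)"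
    using measure_Union_cb[OF F'(2) F'pos F'pw] F'(3) by simp
  also have "\<dots> \<le> (\<Sum>j\<in>F'. incr f j)"
    unfolding sum_distrib_left using F' C'(2) by (intro sum_mono) (auto simp: K'_def)
  also have "\<dots> = (\<Sum>i\<in>F. \<Sum>j\<in>{j\<in>F'. \<sigma> j = i}. incr f j)"
    unfolding F_def by (rule sum.image_gen[OF F'(2)])
  also have "\<dots> \<le> (\<Sum>i\<in>F. incr f i)"
  proof (rule sum_mono)
    fix i assume iF: "i \<in> F"
    have ipos: "0 < snd i" using iF F C(2) by auto
    have sub: "\<forall>j\<in>{j\<in>F'. \<sigma> j = i}. cb j \<subseteq> {fst i - snd i..fst i + snd i}"
    proof
      fix j assume j: "j \<in> {j\<in>F'. \<sigma> j = i}"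
      then have "cb j \<subseteq> cb i" using \<sigma>[of j] F'(1) by auto
      then show "cb j \<subseteq> {fst i - snd i..fst i + snd i}" by (simp add: cb_eq[of i])
    qed
    have pw: "pairwise (\<lambda>i j. disjnt (cb i) (cb j)) {j\<in>F'. \<sigma> j = i}"
      using F'pw pairwise_subset[of _ F'] by (metis (no_types, lifting) mem_Collect_eq subsetI)
    have "(\<Sum>j\<in>{j\<in>F'. \<sigma> j = i}. incr f j) \<le> f (fst i + snd i) - f (fst i - snd i)"
      using sum_incr_le[OF f, of "{j\<in>F'. \<sigma> j = i}" "fst i - snd i" "fst i + snd i"]
        F'(2) F'pos pw ipos sub by auto
    then show "(\<Sum>j\<in>{j\<in>F'. \<sigma> j = i}. incr f j) \<le> incr f i" by (simp add: incr_def)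
  qed
  finally show ?thesis using that T ET F unfolding E'_def by blast
qed

lemma outer_inf:
  fixes E :: "real set"
  assumes "E \<subseteq> {a..b}"
  defines "s \<equiv> Inf {measure lebesgue T | T. E \<subseteq> T \<and> T \<in> lmeasurable}"
  shows "\<And>T. E \<subseteq> T \<Longrightarrow> T \<in> lmeasurable \<Longrightarrow> s \<le> measure lebesgue T"
    and "\<And>e. 0 < e \<Longrightarrow> \<exists>T. E \<subseteq> T \<and> T \<in> lmeasurable \<and> measure lebesgue T < s + e"
    and "0 \<le> s"
proof -
  let ?M = "{measure lebesgue T | T. E \<subseteq> T \<and> T \<in> lmeasurable}"
  have ne: "?M \<noteq> {}" using assms(1) by auto
  have bdd: "bdd_below ?M" by (rule bdd_belowI[of _ 0]) auto
  show "s \<le> measure lebesgue T" if "E \<subseteq> T" "T \<in> lmeasurable" for T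
    unfolding s_def by (rule cInf_lower) (use that bdd in auto)
  show "\<exists>T. E \<subseteq> T \<and> T \<in> lmeasurable \<and> measure lebesgue T < s + e" if "0 < e" for e
  proof -
    have "Inf ?M < s + e" using that by (simp add: s_def)
    then obtain m where "m \<in> ?M" "m < s + e" using cInf_lessD[OF ne] by blast
    then show ?thesis by auto
  qed
  show "0 \<le> s" unfolding s_def by (rule cInf_greatest[OF ne]) auto
qed

lemma outer_zero_negligible:
  assumes "\<And>e. 0 < e \<Longrightarrow> \<exists>T. E \<subseteq> T \<and> T \<in> lmeasurable \<and> measure lebesgue T < e"
  shows "negligible E"
  using assms unfolding negligible_outer by blast

lemma open_approx:
  assumes T0: "T0 \<in> lmeasurable" and e: "0 < e"
  obtains U where "open U" "T0 \<subseteq> U" "U \<in> lmeasurable" "measure lebesgue U < measure lebesgue T0 + e"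
proof -
  obtain U where U: "open U" "T0 \<subseteq> U" "(U - T0) \<in> lmeasurable" "emeasure lebesgue (U - T0) < ennreal e"
    using sets_lebesgue_outer_open[of T0 e] T0 e by (auto intro: fmeasurableD)
  have "measure lebesgue (U - T0) < e"
    using U(3,4) e by (simp add: emeasure_eq_measure2 ennreal_less_iff)
  have eq: "U = T0 \<union> (U - T0)" using U by auto
  have Um: "U \<in> lmeasurable" using T0 U(3) eq by (metis fmeasurable.Un)
  have "measure lebesgue U \<le> measure lebesgue T0 + measure lebesgue (U - T0)"
    by (subst eq, rule measure_Un_le) (use T0 U(3) in \<open>auto intro: fmeasurableD\<close>)
  with \<open>measure lebesgue (U - T0) < e\<close> have "measure lebesgue U < measure lebesgue T0 + e" by simp
  with U Um that show ?thesis by blast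
qed

lemma cross_negligible:
  fixes f :: "real \<Rightarrow> real"
  assumes f: "mono f" and p: "0 < p" and pq: "p < q" and Eab: "E \<subseteq> {a..b}"
  and L: "\<forall>x\<in>E. \<forall>d>0. \<exists>h. 0<h \<and> h<d \<and> f x - f (x-h) \<le> p * h"
  and R: "\<forall>x\<in>E. \<forall>d>0. \<exists>k. 0<k \<and> k<d \<and> q * k \<le> f (x+k) - f x"
  shows "negligible E"
proof -
  define s where "s = Inf {measure lebesgue T | T. E \<subseteq> T \<and> T \<in> lmeasurable}"
  note s1 = outer_inf(1)[OF Eab, folded s_def] and s2 = outer_inf(2)[OF Eab, folded s_def]
    and s3 = outer_inf(3)[OF Eab, folded s_def]
  have key: "(q - p) * s \<le> (q + 2*p) * e" if e: "0 < e" for e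
  proof -
    obtain T0 where T0: "E \<subseteq> T0" "T0 \<in> lmeasurable" "measure lebesgue T0 < s + e" using s2[OF e] by blast
    obtain U where U: "open U" "T0 \<subseteq> U" "U \<in> lmeasurable" "measure lebesgue U < measure lebesgue T0 + e"
      using open_approx[OF T0(2) e] by blast
    define K where "K = {i. 0 < snd i \<and> cb i \<subseteq> U \<and> incr f i \<le> p * (2 * snd i)}"
    have cov: "\<exists>i. i \<in> K \<and> x \<in> cball (fst i) (snd i) \<and> snd i < d" if x: "x \<in> E" and d: "0 < d" for x d
    proof -
      obtain \<rho> where \<rho>: "0 < \<rho>" "ball x \<rho> \<subseteq> U" using U(1,2) T0(1) x open_contains_ball by blast
      obtain h where h: "0 < h" "h < min d \<rho>" "f x - f (x-h) \<le> p * h"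
        using L x \<rho> d by (metis min_less_iff_conj)
      define i where "i = (x - h/2, h/2)"
      have "cb i \<subseteq> ball x \<rho>" using h by (auto simp: cb_eq i_def dist_real_def)
      then have "i \<in> K" using h \<rho> by (auto simp: K_def i_def incr_def)
      moreover have "x \<in> cball (fst i) (snd i)" using h by (simp add: i_def dist_real_def)
      moreover have "snd i < d" using h by (simp add: i_def)
      ultimately show ?thesis by blast
    qed
    obtain C where C: "countable C" "C \<subseteq> K"
       "pairwise (\<lambda>i j. disjnt (cball (fst i) (snd i)) (cball (fst j) (snd j))) C"
       "negligible(E - (\<Union>i \<in> C. cball (fst i) (snd i)))"
      using Vitali_covering_theorem_cballs[of K snd E fst] cov by (auto simp: K_def)
    have Cpw: "pairwise (\<lambda>i j. disjnt (cb i) (cb j)) C" using C(3) by (simp add: cb_def)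
    have Cpos: "\<forall>i\<in>C. 0 < snd i" using C(2) by (auto simp: K_def)
    have CU: "\<forall>i\<in>C. cb i \<subseteq> U" using C(2) by (auto simp: K_def)
    obtain T F where TF: "T \<in> lmeasurable" "E \<inter> (\<Union>i\<in>C. ball (fst i) (snd i)) \<subseteq> T" "finite F" "F \<subseteq> C"
      "q * (measure lebesgue T - e) \<le> (\<Sum>i\<in>F. incr f i)"
      using vitali_step2[OF f _ C(1) Cpos Cpw U(3) CU R e] p pq by auto
    define Z where "Z = (\<Union>i\<in>C. {fst i - snd i, fst i + snd i})"
    have negZ: "negligible Z" unfolding Z_def
      by (rule negligible_countable_Union) (use C(1) in \<open>auto intro: negligible_finite\<close>)
    define N where "N = (E - (\<Union>i \<in> C. cball (fst i) (snd i))) \<union> Z"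
    have negN: "negligible N" unfolding N_def using C(4) negZ by (rule negligible_Un)
    have ETN: "E \<subseteq> T \<union> N"
    proof
      fix x assume x: "x \<in> E"
      show "x \<in> T \<union> N"
      proof (cases "\<exists>i\<in>C. x \<in> cball (fst i) (snd i)")
        case True
        then obtain i where i: "i \<in> C" "x \<in> cball (fst i) (snd i)" by blast
        show ?thesis
        proof (cases "x \<in> ball (fst i) (snd i)")
          case True
          then have "x \<in> E \<inter> (\<Union>i\<in>C. ball (fst i) (snd i))" using x i by blast
          then show ?thesis using TF(2) by blast
        next
          case False
          then have "x = fst i - snd i \<or> x = fst i + snd i" using i(2) by (auto simp: dist_real_def)
          then show ?thesis using i by (auto simp: N_def Z_def)
        qed
      qed (use x in \<open>auto simp: N_def\<close>)
    qed
    have TN: "T \<union> N \<in> lmeasurable"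
      by (rule lmeasurable_negligible_symdiff[OF TF(1)]) (auto intro: negligible_subset[OF negN])
    have mTN: "measure lebesgue (T \<union> N) = measure lebesgue T"
      by (rule measure_negligible_symdiff[OF TF(1)]) (auto intro: negligible_subset[OF negN])
    have sT: "s \<le> measure lebesgue T" using s1[OF ETN TN] mTN by simp
    have Fpos: "\<forall>i\<in>F. 0 < snd i" using Cpos TF(4) by auto
    have Fpw: "pairwise (\<lambda>i j. disjnt (cb i) (cb j)) F" using Cpw TF(4) pairwise_subset by blast
    have "(\<Sum>i\<in>F. incr f i) \<le> (\<Sum>i\<in>F. p * (2 * snd i))"
      using TF(4) C(2) by (intro sum_mono) (auto simp: K_def)
    also have "\<dots> = p * measure lebesgue (\<Union>(cb ` F))"
      using measure_Union_cb[OF TF(3) Fpos Fpw] by (simp add: sum_distrib_left)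
    also have "\<dots> \<le> p * measure lebesgue U"
    proof -
      have "measure lebesgue (\<Union>(cb ` F)) \<le> measure lebesgue U"
      proof (rule measure_mono_fmeasurable)
        show "\<Union>(cb ` F) \<subseteq> U" using CU TF(4) by auto
        show "\<Union>(cb ` F) \<in> sets lebesgue"
          using TF(3) by (intro sets.finite_UN) (auto simp: cb_def intro!: fmeasurableD)
      qed (use U in auto)
      then show ?thesis using p by simp
    qed
    finally have "q * (measure lebesgue T - e) \<le> p * measure lebesgue U" using TF(5) by linarith
    moreover have "p * measure lebesgue U \<le> p * (s + 2*e)" using U(4) T0(3) p by simp
    moreover have "q * (s - e) \<le> q * (measure lebesgue T - e)" using sT p pq by simp
    ultimately have "q * (s - e) \<le> p * (s + 2*e)" by linarith
    then show ?thesis by (simp add: algebra_simps)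
  qed
  have "(q - p) * s / (q + 2*p) \<le> 0"
  proof (rule field_le_epsilon)
    fix e :: real assume e: "0 < e"
    have "(q - p) * s \<le> (q + 2*p) * e" using key[OF e] .
    then show "(q - p) * s / (q + 2*p) \<le> 0 + e" using p pq by (simp add: divide_le_eq mult.commute)
  qed
  then have "s \<le> 0" using p pq by (simp add: divide_le_0_iff mult_le_0_iff)
  then have s0: "s = 0" using s3 by simp
  show ?thesis using s2 s0 by (intro outer_zero_negligible) auto
qed



lemma conv_crit:
  fixes g :: "real \<Rightarrow> real"
  assumes F: "F \<noteq> bot" and B: "eventually (\<lambda>h. \<bar>g h\<bar> \<le> B) F"
   and no: "\<And>p q. p < q \<Longrightarrow> (\<exists>\<^sub>F h in F. g h \<le> p) \<Longrightarrow> (\<exists>\<^sub>F h in F. q \<le> g h) \<Longrightarrow> False"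
  shows "\<exists>l. (g \<longlongrightarrow> l) F"
proof -
  define G where "G = (\<lambda>h. ereal (g h))"
  define Li where "Li = Liminf F G"
  define Ls where "Ls = Limsup F G"
  have LiLs: "Li \<le> Ls" unfolding Li_def Ls_def using F by (simp add: Liminf_le_Limsup)
  have Lib: "ereal (-B) \<le> Li" unfolding Li_def le_Liminf_iff
  proof (intro allI impI)
    fix y assume "y < ereal (-B)"
    show "eventually (\<lambda>x. y < G x) F"
    proof (rule eventually_mono[OF B])
      fix h assume "\<bar>g h\<bar> \<le> B"
      then have "ereal (-B) \<le> G h" by (simp add: G_def)
      then show "y < G h" using \<open>y < ereal (-B)\<close> by (rule order_less_le_trans[rotated])
    qed
  qed
  have Lsb: "Ls \<le> ereal B" unfolding Ls_def Limsup_le_iff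
  proof (intro allI impI)
    fix y assume "ereal B < y"
    show "eventually (\<lambda>x. y > G x) F"
    proof (rule eventually_mono[OF B])
      fix h assume "\<bar>g h\<bar> \<le> B"
      then have "G h \<le> ereal B" by (simp add: G_def)
      then show "G h < y" using \<open>ereal B < y\<close> by (rule order_le_less_trans)
    qed
  qed
  obtain li where li: "Li = ereal li" using Lib LiLs Lsb by (cases Li) auto
  obtain ls where ls: "Ls = ereal ls" using Lib LiLs Lsb by (cases Ls) auto
  have "li = ls"
  proof (rule ccontr)
    assume "li \<noteq> ls"
    then have lt: "li < ls" using LiLs li ls by simp
    define p where "p = li + (ls - li)/3"
    define q where "q = ls - (ls - li)/3"
    have pq: "p < q" using lt by (simp add: p_def q_def field_simps)
    have "\<not> ereal p \<le> Li" using lt li by (simp add: p_def)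
    then obtain y where y: "y < ereal p" "\<not> eventually (\<lambda>x. y < G x) F"
      unfolding Li_def le_Liminf_iff by auto
    have f1: "\<exists>\<^sub>F h in F. g h \<le> p"
      unfolding frequently_def
    proof
      assume ev: "eventually (\<lambda>h. \<not> g h \<le> p) F"
      have "eventually (\<lambda>x. y < G x) F"
      proof (rule eventually_mono[OF ev])
        fix h assume "\<not> g h \<le> p"
        then have "ereal p < G h" by (simp add: G_def)
        then show "y < G h" using y(1) by (rule order.strict_trans[rotated])
      qed
      then show False using y(2) by blast
    qed
    have "\<not> Ls \<le> ereal q" using lt ls by (simp add: q_def)
    then obtain y where y: "y > ereal q" "\<not> eventually (\<lambda>x. y > G x) F"
      unfolding Ls_def Limsup_le_iff by auto
    have f2: "\<exists>\<^sub>F h in F. q \<le> g h"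
      unfolding frequently_def
    proof
      assume ev: "eventually (\<lambda>h. \<not> q \<le> g h) F"
      have "eventually (\<lambda>x. y > G x) F"
      proof (rule eventually_mono[OF ev])
        fix h assume "\<not> q \<le> g h"
        then have "G h < ereal q" by (simp add: G_def)
        then show "G h < y" using y(1) by (rule order.strict_trans)
      qed
      then show False using y(2) by blast
    qed
    show False using no[OF pq f1 f2] .
  qed
  then have "(G \<longlongrightarrow> ereal li) F"
    using Liminf_eq_Limsup[of F G "ereal li"] F li ls by (simp add: Li_def Ls_def)
  then show ?thesis unfolding G_def by auto
qed

lemma freq_right:
  "(\<exists>\<^sub>F k in at_right (0::real). P k) \<longleftrightarrow> (\<forall>d>0. \<exists>k. 0<k \<and> k<d \<and> P k)"
  by (auto simp: frequently_def eventually_at_right_field)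

lemma freq_left:
  "(\<exists>\<^sub>F h in at_left (0::real). P h) \<longleftrightarrow> (\<forall>d>0. \<exists>h. 0<h \<and> h<d \<and> P (-h))"
proof -
  have "(\<exists>\<^sub>F h in at_left (0::real). P h) \<longleftrightarrow> (\<forall>b<0. \<exists>y>b. y < 0 \<and> P y)"
    by (auto simp: frequently_def eventually_at_left_field)
  also have "\<dots> \<longleftrightarrow> (\<forall>d>0. \<exists>h. 0<h \<and> h<d \<and> P (-h))"
  proof safe
    fix d :: real assume H: "\<forall>b<0. \<exists>y>b. y < 0 \<and> P y" and d: "0 < d"
    then obtain y where "y > -d" "y < 0" "P y" by (meson neg_less_0_iff_less)
    then show "\<exists>h. 0<h \<and> h<d \<and> P (-h)" by (intro exI[of _ "-y"]) auto
  next
    fix b :: real assume H: "\<forall>d>0. \<exists>h. 0<h \<and> h<d \<and> P (-h)" and b: "b < 0"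
    then obtain h where "0<h" "h < -b" "P (-h)" by (meson neg_0_less_iff_less)
    then show "\<exists>y>b. y < 0 \<and> P y" by (intro exI[of _ "-h"]) auto
  qed
  finally show ?thesis .
qed


lemma bigderiv_negligible:
  fixes f :: "real \<Rightarrow> real"
  assumes f: "mono f" and Eab: "E \<subseteq> {a..b}"
  and R: "\<forall>x\<in>E. \<forall>M>0. \<forall>d>0. \<exists>k. 0<k \<and> k<d \<and> M * k \<le> f (x+k) - f x"
  shows "negligible E"
proof (cases "E = {}")
  case True then show ?thesis by simp
next
  case False
  then have ab: "a \<le> b" using Eab by auto
  define c0 where "c0 = ((a+b)/2, (b-a)/2 + 1)"
  have cb0: "cb c0 = {a-1..b+1}" by (simp add: cb_eq c0_def field_simps)
  define \<Delta> where "\<Delta> = f (b+1) - f (a-1)"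
  have \<Delta>: "0 \<le> \<Delta>" using f ab by (simp add: \<Delta>_def mono_def)
  have Eball: "E \<subseteq> ball (fst c0) (snd c0)"
  proof
    fix x assume "x \<in> E"
    then have "a \<le> x" "x \<le> b" using Eab by auto
    then show "x \<in> ball (fst c0) (snd c0)" by (auto simp: c0_def dist_real_def abs_if field_simps)
  qed
  show ?thesis
  proof (rule outer_zero_negligible)
    fix e :: real assume e: "0 < e"
    define M where "M = 2 * (\<Delta> + 1) / e"
    have M: "0 < M" using \<Delta> e by (simp add: M_def)
    have RM: "\<forall>y\<in>E. \<forall>d>0. \<exists>k. 0<k \<and> k<d \<and> M * k \<le> f (y+k) - f y" using R M by blast
    have "0 \<le> (b-a)/2" using ab by simp
    have pos: "\<forall>i\<in>{c0}. 0 < snd i" using ab unfolding c0_def by (simp add: field_simps)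
    obtain T F where TF: "T \<in> lmeasurable" "E \<inter> (\<Union>i\<in>{c0}. ball (fst i) (snd i)) \<subseteq> T" "finite F" "F \<subseteq> {c0}"
      "M * (measure lebesgue T - e/2) \<le> (\<Sum>i\<in>F. incr f i)"
      using vitali_step2[OF f M _ pos _ _ _ RM, of "cb c0" "e/2"] e by (auto simp: cb0)
    have ET: "E \<subseteq> T" using TF(2) Eball by auto
    have "(\<Sum>i\<in>F. incr f i) \<le> \<Delta>"
    proof (cases "F = {}")
      case True then show ?thesis using \<Delta> by simp
    next
      case False
      then have "F = {c0}" using TF(4) by auto
      have e1: "fst c0 + snd c0 = b+1" and e2: "fst c0 - snd c0 = a-1" by (simp_all add: c0_def field_simps)
      show ?thesis using \<open>F = {c0}\<close> by (simp add: incr_def e1 e2 \<Delta>_def)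
    qed
    then have "M * (measure lebesgue T - e/2) \<le> \<Delta>" using TF(5) by linarith
    then have "measure lebesgue T - e/2 \<le> \<Delta> / M" using M by (simp add: field_simps)
    also have "\<Delta> / M = \<Delta> * e / (2 * (\<Delta> + 1))" using e \<Delta> by (simp add: M_def field_simps)
    also have "\<dots> < e / 2" using e \<Delta> by (simp add: field_simps)
    finally have "measure lebesgue T < e" by simp
    then show "\<exists>T. E \<subseteq> T \<and> T \<in> lmeasurable \<and> measure lebesgue T < e" using ET TF(1) by blast
  qed
qed

definition Lle :: "(real \<Rightarrow> real) \<Rightarrow> real \<Rightarrow> real \<Rightarrow> bool" where "Lle f x p \<longleftrightarrow> (\<forall>d>0. \<exists>h. 0<h \<and> h<d \<and> f x - f (x-h) \<le> p * h)"
definition Lge :: "(real \<Rightarrow> real) \<Rightarrow> real \<Rightarrow> real \<Rightarrow> bool" where "Lge f x q \<longleftrightarrow> (\<forall>d>0. \<exists>h. 0<h \<and> h<d \<and> q * h \<le> f x - f (x-h))"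
definition Rle :: "(real \<Rightarrow> real) \<Rightarrow> real \<Rightarrow> real \<Rightarrow> bool" where "Rle f x p \<longleftrightarrow> (\<forall>d>0. \<exists>k. 0<k \<and> k<d \<and> f (x+k) - f x \<le> p * k)"
definition Rge :: "(real \<Rightarrow> real) \<Rightarrow> real \<Rightarrow> real \<Rightarrow> bool" where "Rge f x q \<longleftrightarrow> (\<forall>d>0. \<exists>k. 0<k \<and> k<d \<and> q * k \<le> f (x+k) - f x)"

lemma Lle_mono: "Lle f x p \<Longrightarrow> p \<le> p' \<Longrightarrow> Lle f x p'"
  unfolding Lle_def
proof (intro allI impI)
  fix d :: real assume H: "\<forall>d>0. \<exists>h. 0<h \<and> h<d \<and> f x - f (x-h) \<le> p * h" and r: "p \<le> p'" and d: "0 < d"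
  then obtain h where h: "0<h" "h<d" "f x - f (x-h) \<le> p * h" by blast
  have "p * h \<le> p' * h" using mult_right_mono[OF r] h(1) by simp
  then have "f x - f (x-h) \<le> p' * h" using h(3) by linarith
  then show "\<exists>h. 0<h \<and> h<d \<and> f x - f (x-h) \<le> p' * h" using h by blast
qed
lemma Rle_mono: "Rle f x p \<Longrightarrow> p \<le> p' \<Longrightarrow> Rle f x p'"
  unfolding Rle_def
proof (intro allI impI)
  fix d :: real assume H: "\<forall>d>0. \<exists>h. 0<h \<and> h<d \<and> f (x+h) - f x \<le> p * h" and r: "p \<le> p'" and d: "0 < d"
  then obtain h where h: "0<h" "h<d" "f (x+h) - f x \<le> p * h" by blast
  have "p * h \<le> p' * h" using mult_right_mono[OF r] h(1) by simp
  then have "f (x+h) - f x \<le> p' * h" using h(3) by linarith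
  then show "\<exists>h. 0<h \<and> h<d \<and> f (x+h) - f x \<le> p' * h" using h by blast
qed
lemma Lge_mono: "Lge f x q \<Longrightarrow> q' \<le> q \<Longrightarrow> Lge f x q'"
  unfolding Lge_def
proof (intro allI impI)
  fix d :: real assume H: "\<forall>d>0. \<exists>h. 0<h \<and> h<d \<and> q * h \<le> f x - f (x-h)" and r: "q' \<le> q" and d: "0 < d"
  then obtain h where h: "0<h" "h<d" "q * h \<le> f x - f (x-h)" by blast
  have "q' * h \<le> q * h" using mult_right_mono[OF r] h(1) by simp
  then have "q' * h \<le> f x - f (x-h)" using h(3) by linarith
  then show "\<exists>h. 0<h \<and> h<d \<and> q' * h \<le> f x - f (x-h)" using h by blast
qed
lemma Rge_mono: "Rge f x q \<Longrightarrow> q' \<le> q \<Longrightarrow> Rge f x q'"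
  unfolding Rge_def
proof (intro allI impI)
  fix d :: real assume H: "\<forall>d>0. \<exists>h. 0<h \<and> h<d \<and> q * h \<le> f (x+h) - f x" and r: "q' \<le> q" and d: "0 < d"
  then obtain h where h: "0<h" "h<d" "q * h \<le> f (x+h) - f x" by blast
  have "q' * h \<le> q * h" using mult_right_mono[OF r] h(1) by simp
  then have "q' * h \<le> f (x+h) - f x" using h(3) by linarith
  then show "\<exists>h. 0<h \<and> h<d \<and> q' * h \<le> f (x+h) - f x" using h by blast
qed

lemma Lle_or_Lge: "Lle f x m \<or> Lge f x m"
proof (rule disjCI)
  assume "\<not> Lge f x m"
  then obtain d where d: "0 < d" "\<forall>h. 0<h \<and> h<d \<longrightarrow> f x - f (x-h) < m * h"
    unfolding Lge_def not_le by (meson not_less)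
  show "Lle f x m" unfolding Lle_def
  proof (intro allI impI)
    fix d' :: real assume "0 < d'"
    define h where "h = min d d' / 2"
    have h: "0 < h" "h < d" "h < d'" using d \<open>0 < d'\<close> by (auto simp: h_def)
    then have "f x - f (x-h) \<le> m * h" using d(2) by (simp add: less_imp_le)
    then show "\<exists>h. 0<h \<and> h<d' \<and> f x - f (x-h) \<le> m * h" using h by blast
  qed
qed

lemma Rle_or_Rge: "Rle f x m \<or> Rge f x m"
proof (rule disjCI)
  assume "\<not> Rge f x m"
  then obtain d where d: "0 < d" "\<forall>h. 0<h \<and> h<d \<longrightarrow> f (x+h) - f x < m * h"
    unfolding Rge_def not_le by (meson not_less)
  show "Rle f x m" unfolding Rle_def
  proof (intro allI impI)
    fix d' :: real assume "0 < d'"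
    define h where "h = min d d' / 2"
    have h: "0 < h" "h < d" "h < d'" using d \<open>0 < d'\<close> by (auto simp: h_def)
    then have "f (x+h) - f x \<le> m * h" using d(2) by (simp add: less_imp_le)
    then show "\<exists>k. 0<k \<and> k<d' \<and> f (x+k) - f x \<le> m * k" using h by blast
  qed
qed



lemma frequently_sup_iff: "(\<exists>\<^sub>F x in sup F G. P x) \<longleftrightarrow> (\<exists>\<^sub>F x in F. P x) \<or> (\<exists>\<^sub>F x in G. P x)"
  by (simp add: frequently_def eventually_sup)

lemma freq_mono: "(\<forall>d>0. \<exists>h. 0<h \<and> h<d \<and> P h) \<Longrightarrow> (\<And>h. 0<h \<Longrightarrow> P h \<Longrightarrow> Q h) \<Longrightarrow> (\<forall>d>0. \<exists>h::real. 0<h \<and> h<d \<and> Q h)"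
  by blast

lemma good_point_diff:
  fixes f :: "real \<Rightarrow> real"
  assumes f: "mono f"
  and a: "\<And>p q. p \<in> \<rat> \<Longrightarrow> q \<in> \<rat> \<Longrightarrow> 0 < p \<Longrightarrow> p < q \<Longrightarrow> \<not> (Lle f x p \<and> Rge f x q)"
  and b: "\<And>p q. p \<in> \<rat> \<Longrightarrow> q \<in> \<rat> \<Longrightarrow> 0 < p \<Longrightarrow> p < q \<Longrightarrow> \<not> (Rle f x p \<and> Lge f x q)"
  and c: "\<not> (\<forall>M>0. Rge f x M)"
  and d: "\<not> (\<forall>M>0. Lge f x M)"
  shows "f differentiable (at x)"
proof -
  define g where "g h = (f (x+h) - f x)/h" for h
  have gnn: "0 \<le> g h" for h
  proof (cases "0 < h")
    case True
    then have "f x \<le> f (x+h)" using f by (simp add: mono_def)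
    then show ?thesis using True by (simp add: g_def)
  next
    case False
    then have "f (x+h) \<le> f x" using f by (simp add: mono_def)
    then show ?thesis using False by (simp add: g_def divide_nonpos_nonpos)
  qed
  have gneg: "g (-h) = (f x - f (x-h)) / h" for h
    by (simp add: g_def minus_divide_right[symmetric]) (simp add: minus_divide_left)
  obtain M where M: "0 < M" "\<not> Rge f x M" using c by blast
  then obtain d1 where d1: "0 < d1" "\<forall>k. 0<k \<and> k<d1 \<longrightarrow> f (x+k) - f x < M * k"
    unfolding Rge_def not_le by (meson not_less)
  obtain M' where M': "0 < M'" "\<not> Lge f x M'" using d by blast
  then obtain d2 where d2: "0 < d2" "\<forall>h. 0<h \<and> h<d2 \<longrightarrow> f x - f (x-h) < M' * h"
    unfolding Lge_def not_le by (meson not_less)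
  have bnd: "eventually (\<lambda>h. \<bar>g h\<bar> \<le> M + M') (at 0)"
    unfolding eventually_at
  proof (intro exI[of _ "min d1 d2"] conjI ballI impI)
    show "0 < min d1 d2" using d1 d2 by simp
    fix h :: real assume h: "h \<noteq> 0 \<and> dist h 0 < min d1 d2"
    show "\<bar>g h\<bar> \<le> M + M'"
    proof (cases "0 < h")
      case True
      then have "f (x+h) - f x < M * h" using d1 h by (auto simp: dist_real_def)
      then have "g h < M" using True by (simp add: g_def pos_divide_less_eq)
      then show ?thesis using gnn[of h] M' by simp
    next
      case False
      then have hn: "0 < -h" using h by simp
      have "-h < d2" using h by (auto simp: dist_real_def)
      then have "f x - f (x-(-h)) < M' * (-h)" using d2(2) hn by blast
      then have lt: "(f x - f (x-(-h))) / (-h) < M'" using pos_divide_less_eq[OF hn] by blast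
      have "g h = (f x - f (x-(-h))) / (-h)" using gneg[of "-h"] by simp
      then have "g h < M'" using lt by simp
      then show ?thesis using gnn[of h] M by simp
    qed
  qed
  have fr_le: "Rle f x p \<or> Lle f x p" if "\<exists>\<^sub>F h in at 0. g h \<le> p" for p
  proof -
    have "(\<exists>\<^sub>F h in at_left 0. g h \<le> p) \<or> (\<exists>\<^sub>F h in at_right 0. g h \<le> p)"
      using that by (simp add: at_eq_sup_left_right frequently_sup_iff)
    then show ?thesis
    proof
      assume "\<exists>\<^sub>F h in at_left 0. g h \<le> p"
      then have "\<forall>d>0. \<exists>h. 0<h \<and> h<d \<and> g (-h) \<le> p" by (simp add: freq_left)
      then have "Lle f x p" unfolding Lle_def gneg by (rule freq_mono) (simp add: pos_divide_le_eq)
      then show ?thesis by simp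
    next
      assume "\<exists>\<^sub>F h in at_right 0. g h \<le> p"
      then have "\<forall>d>0. \<exists>h. 0<h \<and> h<d \<and> g h \<le> p" by (simp add: freq_right)
      then have "Rle f x p" unfolding Rle_def g_def by (rule freq_mono) (simp add: pos_divide_le_eq)
      then show ?thesis by simp
    qed
  qed
  have fr_ge: "Rge f x q \<or> Lge f x q" if "\<exists>\<^sub>F h in at 0. q \<le> g h" for q
  proof -
    have "(\<exists>\<^sub>F h in at_left 0. q \<le> g h) \<or> (\<exists>\<^sub>F h in at_right 0. q \<le> g h)"
      using that by (simp add: at_eq_sup_left_right frequently_sup_iff)
    then show ?thesis
    proof
      assume "\<exists>\<^sub>F h in at_left 0. q \<le> g h"
      then have "\<forall>d>0. \<exists>h. 0<h \<and> h<d \<and> q \<le> g (-h)" by (simp add: freq_left)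
      then have "Lge f x q" unfolding Lge_def gneg by (rule freq_mono) (simp add: pos_le_divide_eq mult.commute)
      then show ?thesis by simp
    next
      assume "\<exists>\<^sub>F h in at_right 0. q \<le> g h"
      then have "\<forall>d>0. \<exists>h. 0<h \<and> h<d \<and> q \<le> g h" by (simp add: freq_right)
      then have "Rge f x q" unfolding Rge_def g_def by (rule freq_mono) (simp add: pos_le_divide_eq mult.commute)
      then show ?thesis by simp
    qed
  qed
  have "\<exists>l. (g \<longlongrightarrow> l) (at 0)"
  proof (rule conv_crit[OF _ bnd])
    show "at (0::real) \<noteq> bot" by simp
    fix p q :: real
    assume pq: "p < q" and F1: "\<exists>\<^sub>F h in at 0. g h \<le> p" and F2: "\<exists>\<^sub>F h in at 0. q \<le> g h"
    obtain h where "g h \<le> p" using frequently_ex[OF F1] by blast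
    then have p0: "0 \<le> p" using gnn[of h] by simp
    obtain p1 where p1: "p1 \<in> \<rat>" "p < p1" "p1 < q" using Rats_dense_in_real[OF pq] by blast
    obtain m where m: "m \<in> \<rat>" "p1 < m" "m < q" using Rats_dense_in_real[OF p1(3)] by blast
    obtain q1 where q1: "q1 \<in> \<rat>" "m < q1" "q1 < q" using Rats_dense_in_real[OF m(3)] by blast
    have p1pos: "0 < p1" using p0 p1 by simp
    have mpos: "0 < m" using p1pos m by simp
    have le: "Rle f x p1 \<or> Lle f x p1"
      using fr_le[OF F1] Rle_mono Lle_mono p1(2) less_imp_le by blast
    have ge: "Rge f x q1 \<or> Lge f x q1"
      using fr_ge[OF F2] Rge_mono Lge_mono q1(3) less_imp_le by blast
    have leM: "Rle f x m \<or> Lle f x m" if "Rle f x p1 \<or> Lle f x p1"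
      using that Rle_mono Lle_mono m(2) less_imp_le by blast
    show False
    proof (cases "Lle f x m")
      case Lm: True
      show False
      proof (cases "Rge f x q1")
        case True then show False using a[OF m(1) q1(1) mpos q1(2)] Lm by blast
      next
        case False
        then have Lq: "Lge f x q1" using ge by blast
        show False
        proof (cases "Rle f x m")
          case True then show False using b[OF m(1) q1(1) mpos q1(2)] Lq by blast
        next
          case False
          then have "Rge f x m" using Rle_or_Rge by blast
          moreover have "Lle f x p1"
          proof -
            have "\<not> Rle f x p1" using False Rle_mono m(2) less_imp_le by blast
            then show ?thesis using le by blast
          qed
          ultimately show False using a[OF p1(1) m(1) p1pos m(2)] by blast
        qed
      qed
    next
      case nLm: False
      then have Lgm: "Lge f x m" using Lle_or_Lge by blast
      have nLp1: "\<not> Lle f x p1" using nLm Lle_mono m(2) less_imp_le by blast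
      then have "Rle f x p1" using le by blast
      then show False using b[OF p1(1) m(1) p1pos m(2)] Lgm by blast
    qed
  qed
  then obtain l where "(g \<longlongrightarrow> l) (at 0)" by blast
  then have "DERIV f x :> l" unfolding DERIV_def g_def .
  then show ?thesis unfolding real_differentiable_def by blast
qed


lemma negligible_by_windows:
  fixes S :: "real set"
  assumes "\<And>n::nat. negligible (S \<inter> {-real n..real n})"
  shows "negligible S"
proof -
  have "S = \<Union>(range (\<lambda>n::nat. S \<inter> {-real n..real n}))"
  proof (intro equalityI subsetI)
    fix x assume "x \<in> S"
    obtain n :: nat where "\<bar>x\<bar> \<le> real n" using real_arch_simple by blast
    then have "x \<in> S \<inter> {-real n..real n}" using \<open>x \<in> S\<close> by (auto simp: abs_le_iff)
    then show "x \<in> \<Union>(range (\<lambda>n::nat. S \<inter> {-real n..real n}))" by blast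
  qed auto
  also have "negligible \<dots>" by (rule negligible_countable_Union) (use assms in auto)
  finally show ?thesis .
qed

lemma negligible_reflect:
  fixes S :: "real set"
  assumes "negligible S" shows "negligible (uminus ` S)"
  by (rule negligible_differentiable_image_negligible) (use assms in \<open>auto intro!: derivative_intros simp: differentiable_on_def\<close>)

lemma mono_reflect: "mono f \<Longrightarrow> mono (\<lambda>y::real. - f (- y) :: real)"
  by (simp add: mono_def)

lemma negl_LR:
  fixes f :: "real \<Rightarrow> real"
  assumes f: "mono f" and p: "0 < p" "p < q"
  shows "negligible {x. Lle f x p \<and> Rge f x q}"
proof (rule negligible_by_windows)
  fix n :: nat
  show "negligible ({x. Lle f x p \<and> Rge f x q} \<inter> {-real n..real n})"
    by (rule cross_negligible[OF f p, of _ "-real n" "real n"]) (auto simp: Lle_def Rge_def)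
qed

lemma negl_RL:
  fixes f :: "real \<Rightarrow> real"
  assumes f: "mono f" and p: "0 < p" "p < q"
  shows "negligible {x. Rle f x p \<and> Lge f x q}"
proof -
  define g where "g = (\<lambda>y::real. - f (- y))"
  have g: "mono g" using mono_reflect[OF f] by (simp add: g_def)
  have "{x. Rle f x p \<and> Lge f x q} \<subseteq> uminus ` {y. Lle g y p \<and> Rge g y q}"
  proof
    fix x assume x: "x \<in> {x. Rle f x p \<and> Lge f x q}"
    have "Lle g (-x) p" using x by (simp add: Lle_def Rle_def g_def algebra_simps)
    moreover have "Rge g (-x) q" using x by (simp add: Rge_def Lge_def g_def algebra_simps)
    ultimately show "x \<in> uminus ` {y. Lle g y p \<and> Rge g y q}" by (intro image_eqI[of _ _ "-x"]) auto
  qed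
  moreover have "negligible (uminus ` {y. Lle g y p \<and> Rge g y q})"
    by (rule negligible_reflect[OF negl_LR[OF g p]])
  ultimately show ?thesis using negligible_subset by blast
qed

lemma negl_Rinf:
  fixes f :: "real \<Rightarrow> real"
  assumes f: "mono f"
  shows "negligible {x. \<forall>M>0. Rge f x M}"
proof (rule negligible_by_windows)
  fix n :: nat
  show "negligible ({x. \<forall>M>0. Rge f x M} \<inter> {-real n..real n})"
    by (rule bigderiv_negligible[OF f, of _ "-real n" "real n"]) (auto simp: Rge_def)
qed

lemma negl_Linf:
  fixes f :: "real \<Rightarrow> real"
  assumes f: "mono f"
  shows "negligible {x. \<forall>M>0. Lge f x M}"
proof -
  define g where "g = (\<lambda>y::real. - f (- y))"
  have g: "mono g" using mono_reflect[OF f] by (simp add: g_def)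
  have "{x. \<forall>M>0. Lge f x M} \<subseteq> uminus ` {y. \<forall>M>0. Rge g y M}"
  proof
    fix x assume x: "x \<in> {x. \<forall>M>0. Lge f x M}"
    have "\<forall>M>0. Rge g (-x) M" using x by (simp add: Rge_def Lge_def g_def algebra_simps)
    then show "x \<in> uminus ` {y. \<forall>M>0. Rge g y M}" by (intro image_eqI[of _ _ "-x"]) auto
  qed
  moreover have "negligible (uminus ` {y. \<forall>M>0. Rge g y M})"
    by (rule negligible_reflect[OF negl_Rinf[OF g]])
  ultimately show ?thesis using negligible_subset by blast
qed

theorem mono_differentiable_ae:
  fixes f :: "real \<Rightarrow> real"
  assumes f: "mono f"
  shows "negligible {x. \<not> f differentiable (at x)}"
proof -
  define P where "P = (\<lambda>(p::rat,q::rat). {x. 0 < p \<and> p < q \<and> ((Lle f x (of_rat p) \<and> Rge f x (of_rat q)) \<or>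
      (Rle f x (of_rat p) \<and> Lge f x (of_rat q)))})"
  define Bad where "Bad = \<Union>(range P) \<union> {x. \<forall>M>0. Rge f x M} \<union> {x. \<forall>M>0. Lge f x M}"
  have nP: "negligible (\<Union>(range P))"
  proof (rule negligible_countable_Union)
    show "countable (range P)" by simp
    fix S assume "S \<in> range P"
    then obtain p q where S: "S = P (p,q)" by auto
    show "negligible S"
    proof (cases "0 < p \<and> p < q")
      case True
      then have pq: "0 < (of_rat p :: real)" "(of_rat p :: real) < of_rat q" by (simp_all add: of_rat_less)
      have "S \<subseteq> {x. Lle f x (of_rat p) \<and> Rge f x (of_rat q)} \<union> {x. Rle f x (of_rat p) \<and> Lge f x (of_rat q)}"
        using S by (auto simp: P_def)
      moreover have "negligible ({x. Lle f x (of_rat p) \<and> Rge f x (of_rat q)} \<union> {x. Rle f x (of_rat p) \<and> Lge f x (of_rat q)})"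
        using negl_LR[OF f pq] negl_RL[OF f pq] by (rule negligible_Un)
      ultimately show ?thesis using negligible_subset by blast
    next
      case False then have "S = {}" using S by (auto simp: P_def)
      then show ?thesis by simp
    qed
  qed
  have nBad: "negligible Bad" unfolding Bad_def using nP negl_Rinf[OF f] negl_Linf[OF f] by (simp add: negligible_Un)
  have "{x. \<not> f differentiable (at x)} \<subseteq> Bad"
  proof
    fix x assume x: "x \<in> {x. \<not> f differentiable (at x)}"
    show "x \<in> Bad"
    proof (rule ccontr)
      assume nb: "x \<notin> Bad"
      have "f differentiable (at x)"
      proof (rule good_point_diff[OF f])
        show "\<not> (Lle f x p \<and> Rge f x q)" if "p \<in> \<rat>" "q \<in> \<rat>" "0 < p" "p < q" for p q
        proof -
          from that(1) obtain p' where p': "p = of_rat p'" by (rule Rats_cases)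
          from that(2) obtain q' where q': "q = of_rat q'" by (rule Rats_cases)
          have "0 < p' \<and> p' < q'" using that p' q' by (simp add: of_rat_less)
          then have "x \<notin> P (p', q')" using nb unfolding Bad_def by blast
          then have "\<not> ((Lle f x (of_rat p') \<and> Rge f x (of_rat q')) \<or> (Rle f x (of_rat p') \<and> Lge f x (of_rat q')))"
            using \<open>0 < p' \<and> p' < q'\<close> by (simp add: P_def)
          then show ?thesis using p' q' by blast
        qed
        show "\<not> (Rle f x p \<and> Lge f x q)" if "p \<in> \<rat>" "q \<in> \<rat>" "0 < p" "p < q" for p q
        proof -
          from that(1) obtain p' where p': "p = of_rat p'" by (rule Rats_cases)
          from that(2) obtain q' where q': "q = of_rat q'" by (rule Rats_cases)
          have "0 < p' \<and> p' < q'" using that p' q' by (simp add: of_rat_less)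
          then have "x \<notin> P (p', q')" using nb unfolding Bad_def by blast
          then have "\<not> ((Lle f x (of_rat p') \<and> Rge f x (of_rat q')) \<or> (Rle f x (of_rat p') \<and> Lge f x (of_rat q')))"
            using \<open>0 < p' \<and> p' < q'\<close> by (simp add: P_def)
          then show ?thesis using p' q' by blast
        qed
        show "\<not> (\<forall>M>0. Rge f x M)" using nb unfolding Bad_def by blast
        show "\<not> (\<forall>M>0. Lge f x M)" using nb unfolding Bad_def by blast
      qed
      then show False using x by simp
    qed
  qed
  then show ?thesis using nBad negligible_subset by blast
qed



lemma seq_deriv:
  fixes f :: "real \<Rightarrow> real"
  assumes "f differentiable (at u)"
  shows "(\<lambda>n. (f (u + 1/Suc n) - f u) * Suc n) \<longlonglongrightarrow> deriv f u"
proof -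
  have "DERIV f u :> deriv f u" using assms DERIV_deriv_iff_real_differentiable by blast
  then have lim: "((\<lambda>h. (f (u+h) - f u)/h) \<longlongrightarrow> deriv f u) (at 0)" by (simp add: DERIV_def)
  have t: "(\<lambda>n. 1 / real (Suc n)) \<longlonglongrightarrow> 0"
    using LIMSEQ_Suc[OF lim_const_over_n[of 1]] by simp
  have s: "filterlim (\<lambda>n::nat. 1/real (Suc n)) (at 0) sequentially"
    unfolding filterlim_at using t by simp
  have "((\<lambda>h. (f (u+h) - f u)/h) \<circ> (\<lambda>n. 1/real (Suc n))) \<longlonglongrightarrow> deriv f u"
    unfolding comp_def by (rule filterlim_compose[OF lim s])
  then show ?thesis by (simp add: o_def)
qed

lemma mono_shift: "mono f \<Longrightarrow> mono (\<lambda>u::real. f (u + c) :: real)"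
  by (simp add: mono_def)

lemma integral_diffquot_le:
  fixes f :: "real \<Rightarrow> real"
  assumes f: "mono f" and b01: "\<And>x. 0 \<le> f x \<and> f x \<le> 1" and ab: "a \<le> b" and d: "0 < d"
  shows "integral {a..b} (\<lambda>u. (f (u + d) - f u) / d) \<le> 1"
proof -
  have int: "f integrable_on {x..y}" for x y
    using f by (intro integrable_on_mono_on) (simp add: mono_on_def mono_def)
  have ints: "(\<lambda>u. f (u + d)) integrable_on {a..b}"
    using mono_shift[OF f] by (intro integrable_on_mono_on) (simp add: mono_on_def mono_def)
  have sh: "integral {a..b} (\<lambda>u. f (u + d)) = integral {a+d..b+d} f"
    using integral_shift_Icc_real[of a b f d] by (simp add: o_def add.commute)
  have c1: "integral {a..a+d} f + integral {a+d..b+d} f = integral {a..b+d} f"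
    by (rule Henstock_Kurzweil_Integration.integral_combine) (use ab d int in auto)
  have c2: "integral {a..b} f + integral {b..b+d} f = integral {a..b+d} f"
    by (rule Henstock_Kurzweil_Integration.integral_combine) (use ab d int in auto)
  have i1: "0 \<le> integral {a..a+d} f" using b01 int by (intro integral_nonneg) auto
  have i2: "integral {b..b+d} f \<le> integral {b..b+d} (\<lambda>_. 1::real)"
    using b01 int by (intro integral_le) auto
  also have "\<dots> = d" using d by simp
  finally have i2': "integral {b..b+d} f \<le> d" .
  have "integral {a..b} (\<lambda>u. (f (u + d) - f u) / d) = (integral {a..b} (\<lambda>u. f (u + d)) - integral {a..b} f) / d"
    using ints int[of a b] by (simp add: integral_diff)
  also have "\<dots> = (integral {b..b+d} f - integral {a..a+d} f) / d"
    using sh c1 c2 by simp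
  also have "\<dots> \<le> d / d" using i1 i2' d by (intro divide_right_mono) auto
  also have "\<dots> = 1" using d by simp
  finally show ?thesis .
qed


lemma deriv_integrable:
  fixes f :: "real \<Rightarrow> real"
  assumes f: "mono f" and b01: "\<And>x. 0 \<le> f x \<and> f x \<le> 1"
  defines "hm \<equiv> \<lambda>u. max 0 (lim (\<lambda>n. (f (u + 1/Suc n) - f u) * Suc n))"
  shows "hm \<in> borel_measurable borel" and "\<And>u. 0 \<le> hm u"
    and "\<And>u. f differentiable (at u) \<Longrightarrow> hm u = deriv f u"
    and "\<And>a b. hm absolutely_integrable_on {a..b}"
proof -
  define g where "g n u = (f (u + 1/Suc n) - f u) * Suc n" for n u
  have gm: "g n \<in> borel_measurable borel" for n
  proof -
    have "(\<lambda>u. f (u + 1/Suc n)) \<in> borel_measurable borel" by (rule borel_measurable_mono[OF mono_shift[OF f]])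
    moreover have "f \<in> borel_measurable borel" by (rule borel_measurable_mono[OF f])
    ultimately show ?thesis unfolding g_def by measurable
  qed
  have gnn: "0 \<le> g n u" for n u
  proof -
    have "f u \<le> f (u + 1/Suc n)" using f by (simp add: mono_def)
    then show ?thesis by (simp add: g_def)
  qed
  have hm_eq: "hm = (\<lambda>u. max 0 (lim (\<lambda>n. g n u)))" by (simp add: hm_def g_def)
  show hmm: "hm \<in> borel_measurable borel" unfolding hm_eq using gm by measurable
  show hnn: "0 \<le> hm u" for u by (simp add: hm_def)
  have hd: "hm u = deriv f u" if "f differentiable (at u)" for u
  proof -
    have t: "(\<lambda>n. g n u) \<longlonglongrightarrow> deriv f u" using seq_deriv[OF that] by (simp add: g_def)
    then have "0 \<le> deriv f u" using gnn by (intro LIMSEQ_le_const[OF t]) auto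
    moreover have "lim (\<lambda>n. g n u) = deriv f u" using t by (rule limI)
    ultimately show ?thesis by (simp add: hm_eq)
  qed
  then show "\<And>u. f differentiable (at u) \<Longrightarrow> hm u = deriv f u" .
  fix a b :: real
  show "hm absolutely_integrable_on {a..b}"
  proof (cases "a \<le> b")
    case False
    then show ?thesis by (simp add: set_integrable_def)
  next
    case ab: True
    define u where "u n x = ennreal (g n x) * indicator {a..b} x" for n x
    have um: "u n \<in> borel_measurable lborel" for n using gm unfolding u_def by measurable
    have ui: "integral\<^sup>N lborel (u n) \<le> 1" for n
    proof -
      have gint: "g n integrable_on {a..b}"
      proof -
        have "(\<lambda>u. f (u + 1/Suc n)) integrable_on {a..b}"
          using mono_shift[OF f] by (intro integrable_on_mono_on) (simp add: mono_on_def mono_def)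
        moreover have "f integrable_on {a..b}"
          using f by (intro integrable_on_mono_on) (simp add: mono_on_def mono_def)
        ultimately show ?thesis unfolding g_def by (intro integrable_on_mult_left integrable_diff)
      qed
      have eq: "integral\<^sup>N lborel (u n) = ennreal (integral {a..b} (g n))"
        unfolding u_def by (rule nn_integral_has_integral_lebesgue') (use gnn gint in auto)
      have geq: "g n = (\<lambda>x. (f (x + 1/Suc n) - f x) / (1/Suc n))"
        by (rule ext) (simp add: g_def)
      have "integral {a..b} (g n) \<le> 1" unfolding geq by (rule integral_diffquot_le[OF f b01 ab]) simp
      then show ?thesis unfolding eq by (simp add: ennreal_leI)
    qed
    have N: "negligible {x. \<not> f differentiable (at x)}" by (rule mono_differentiable_ae[OF f])
    have ae: "AE x in lborel. ennreal (hm x) * indicator {a..b} x = liminf (\<lambda>n. u n x)"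
    proof -
      have "AE x in lebesgue. ennreal (hm x) * indicator {a..b} x = liminf (\<lambda>n. u n x)"
      proof (rule AE_I')
        show "{x. \<not> f differentiable (at x)} \<in> null_sets lebesgue" using N by (simp add: negligible_iff_null_sets)
        show "{x \<in> space lebesgue. \<not> ennreal (hm x) * indicator {a..b} x = liminf (\<lambda>n. u n x)}
              \<subseteq> {x. \<not> f differentiable (at x)}"
        proof safe
          fix x assume neq: "ennreal (hm x) * indicator {a..b} x \<noteq> liminf (\<lambda>n. u n x)"
            and dx: "f differentiable (at x)"
          have t: "(\<lambda>n. g n x) \<longlonglongrightarrow> hm x" using seq_deriv[OF dx] hd[OF dx] by (simp add: g_def)
          have "(\<lambda>n. u n x) \<longlonglongrightarrow> ennreal (hm x) * indicator {a..b} x"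
          proof (cases "x \<in> {a..b}")
            case True
            then show ?thesis unfolding u_def using tendsto_ennrealI[OF t] by simp
          next
            case False
            then show ?thesis unfolding u_def by simp
          qed
          then have "liminf (\<lambda>n. u n x) = ennreal (hm x) * indicator {a..b} x"
            by (intro lim_imp_Liminf) auto
          then show False using neq by simp
        qed
      qed
      then show ?thesis by (simp add: AE_completion_iff)
    qed
    have "(\<integral>\<^sup>+ x. ennreal (hm x) * indicator {a..b} x \<partial>lborel) = (\<integral>\<^sup>+ x. liminf (\<lambda>n. u n x) \<partial>lborel)"
      by (rule nn_integral_cong_AE[OF ae])
    also have "\<dots> \<le> liminf (\<lambda>n. integral\<^sup>N lborel (u n))" by (rule nn_integral_liminf[OF um])
    also have "\<dots> \<le> 1" using ui by (intro Liminf_le) auto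
    finally have fin: "(\<integral>\<^sup>+ x. ennreal (hm x) * indicator {a..b} x \<partial>lborel) < \<infinity>"
      by (simp add: le_less_trans)
    have "integrable lborel (\<lambda>x. indicator {a..b} x *\<^sub>R hm x)"
    proof (rule integrableI_nonneg)
      show "(\<lambda>x. indicator {a..b} x *\<^sub>R hm x) \<in> borel_measurable lborel" using hmm by measurable
      show "AE x in lborel. 0 \<le> indicator {a..b} x *\<^sub>R hm x" using hnn by simp
      have "(\<lambda>x. ennreal (indicator {a..b} x *\<^sub>R hm x)) = (\<lambda>x. ennreal (hm x) * indicator {a..b} x)"
        by (auto simp: indicator_def)
      then show "(\<integral>\<^sup>+ x. ennreal (indicator {a..b} x *\<^sub>R hm x) \<partial>lborel) < \<infinity>" using fin by simp
    qed
    then show ?thesis unfolding set_integrable_def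
      by (subst integrable_completion) (use hmm in measurable)
  qed
qed



lemma cdf_facts:
  fixes G :: "real \<Rightarrow> real"
  assumes "cdf_with_density G"
  shows "mono G" "\<And>x. 0 \<le> G x" "\<And>x. G x \<le> 1" "continuous_on UNIV G"
        "(\<lambda>n. G (real n)) \<longlonglongrightarrow> 1" "(\<lambda>n. G (- real n)) \<longlonglongrightarrow> 0"
proof -
  obtain g where gm: "g \<in> borel_measurable borel" and gnn: "\<And>x. 0 \<le> g x" and gi: "integrable lborel g"
    and g1: "integral\<^sup>L lborel g = 1" and G: "\<And>x. G x = (\<integral>t\<in>{..x}. g t \<partial>lborel)"
    using assms unfolding cdf_with_density_def by blast
  show "continuous_on UNIV G" using assms unfolding cdf_with_density_def by blast
  have Gx: "G x = integral\<^sup>L lborel (\<lambda>t. indicator {..x} t * g t)" for x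
    by (simp add: G set_lebesgue_integral_def)
  have ii: "integrable lborel (\<lambda>t. indicator A t * g t)" if "A \<in> sets borel" for A
    using integrable_mult_indicator[of A lborel g] that gi by simp
  show "mono G"
  proof (rule monoI)
    fix x y :: real assume "x \<le> y"
    then have "indicator {..x} t * g t \<le> indicator {..y} t * g t" for t
      using gnn[of t] by (auto simp: indicator_def)
    then show "G x \<le> G y" unfolding Gx by (intro integral_mono ii) auto
  qed
  show "0 \<le> G x" for x unfolding Gx using gnn by (intro integral_nonneg_AE) auto
  show "G x \<le> 1" for x
  proof -
    have "indicator {..x} t * g t \<le> g t" for t using gnn[of t] by (auto simp: indicator_def)
    then have "G x \<le> integral\<^sup>L lborel g" unfolding Gx by (intro integral_mono ii gi) auto
    then show ?thesis using g1 by simp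
  qed
  have "(\<lambda>n. integral\<^sup>L lborel (\<lambda>t. indicator {..real n} t * g t)) \<longlonglongrightarrow> integral\<^sup>L lborel g"
  proof (rule integral_dominated_convergence[where w = g])
    show "g \<in> borel_measurable lborel" using gm by simp
    show "(\<lambda>t. indicator {..real n} t * g t) \<in> borel_measurable lborel" for n using gm by measurable
    show "integrable lborel g" by (rule gi)
    show "AE x in lborel. (\<lambda>n. indicator {..real n} x * g x) \<longlonglongrightarrow> g x"
    proof (rule AE_I2)
      fix x :: real
      obtain N :: nat where "x \<le> real N" using real_arch_simple by blast
      then have "eventually (\<lambda>n. indicator {..real n} x * g x = g x) sequentially"
        unfolding eventually_sequentially by (intro exI[of _ N]) (auto simp: indicator_def)
      then show "(\<lambda>n. indicator {..real n} x * g x) \<longlonglongrightarrow> g x" by (rule tendsto_eventually)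
    qed
    show "AE x in lborel. norm (indicator {..real n} x * g x) \<le> g x" for n
      using gnn by (intro AE_I2) (auto simp: indicator_def)
  qed
  then show "(\<lambda>n. G (real n)) \<longlonglongrightarrow> 1" unfolding Gx g1 .
  have "(\<lambda>n. integral\<^sup>L lborel (\<lambda>t. indicator {..- real n} t * g t)) \<longlonglongrightarrow> integral\<^sup>L lborel (\<lambda>t::real. 0::real)"
  proof (rule integral_dominated_convergence[where w = g and f = "\<lambda>t. 0" and s = "\<lambda>n t. indicator {..- real n} t * g t"])
    show "(\<lambda>t. 0::real) \<in> borel_measurable lborel" by simp
    show "(\<lambda>t. indicator {..- real n} t * g t) \<in> borel_measurable lborel" for n using gm by measurable
    show "integrable lborel g" by (rule gi)
    show "AE x in lborel. (\<lambda>n. indicator {..- real n} x * g x) \<longlonglongrightarrow> 0"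
    proof (rule AE_I2)
      fix x :: real
      obtain N :: nat where "-x < real N" using reals_Archimedean2 by blast
      then have "eventually (\<lambda>n. indicator {..- real n} x * g x = 0) sequentially"
        unfolding eventually_sequentially by (intro exI[of _ N]) (auto simp: indicator_def)
      then show "(\<lambda>n. indicator {..- real n} x * g x) \<longlonglongrightarrow> 0" by (rule tendsto_eventually)
    qed
    show "AE x in lborel. norm (indicator {..- real n} x * g x) \<le> g x" for n
      using gnn by (intro AE_I2) (auto simp: indicator_def)
  qed
  then show "(\<lambda>n. G (- real n)) \<longlonglongrightarrow> 0" unfolding Gx by simp
qed


lemma quantile_set:
  fixes G0 :: "real \<Rightarrow> real"
  assumes cdf: "cdf_with_density G0" and x: "0 < x" "x < 1"
  defines "S \<equiv> {t. Fbar0 G0 t \<le> x}"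
  shows "S \<noteq> {}" "bdd_below S" "closed S" "Fbar0_inv G0 x \<in> S"
    "G0 (Fbar0_inv G0 x) = 1 - x"
proof -
  note cf = cdf_facts[OF cdf]
  have S: "S = {t. 1 - x \<le> G0 t}" by (auto simp: S_def Fbar0_def)
  have "eventually (\<lambda>n. 1 - x < G0 (real n)) sequentially"
    using order_tendstoD(1)[OF cf(5)] x by simp
  then obtain n where n: "1 - x < G0 (real n)" by (auto simp: eventually_sequentially)
  have "real n \<in> S" using n S by auto
  then show ne: "S \<noteq> {}" by blast
  have "eventually (\<lambda>n. G0 (- real n) < 1 - x) sequentially"
    using order_tendstoD(2)[OF cf(6)] x by simp
  then obtain m where m: "G0 (- real m) < 1 - x" by (auto simp: eventually_sequentially)
  have lb: "- real m \<le> t" if "t \<in> S" for t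
  proof (rule ccontr)
    assume "\<not> - real m \<le> t"
    then have "G0 t \<le> G0 (- real m)" using cf(1) by (simp add: mono_def)
    then show False using that m S by auto
  qed
  show bdd: "bdd_below S" using lb by (auto simp: bdd_below_def)
  have cont: "continuous_on UNIV G0" by (rule cf(4))
  show cl: "closed S" unfolding S by (rule closed_Collect_le) (use cont in \<open>auto intro: continuous_intros\<close>)
  have QS: "Inf S \<in> S" by (rule closed_contains_Inf[OF ne bdd cl])
  then show "Fbar0_inv G0 x \<in> S" by (simp add: Fbar0_inv_def S_def)
  have ge: "1 - x \<le> G0 (Inf S)" using QS S by auto
  have le: "G0 (Inf S) \<le> 1 - x"
  proof -
    have t: "(\<lambda>n. Inf S - 1 / real (Suc n)) \<longlonglongrightarrow> Inf S"
      using tendsto_diff[OF tendsto_const LIMSEQ_Suc[OF lim_const_over_n[of 1]]] by simp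
    have "isCont G0 (Inf S)" using cont by (simp add: continuous_on_eq_continuous_at)
    then have t2: "(\<lambda>n. G0 (Inf S - 1 / real (Suc n))) \<longlonglongrightarrow> G0 (Inf S)"
      by (rule isCont_tendsto_compose[OF _ t])
    have "G0 (Inf S - 1 / real (Suc n)) \<le> 1 - x" for n
    proof (rule ccontr)
      assume "\<not> G0 (Inf S - 1 / real (Suc n)) \<le> 1 - x"
      then have "Inf S - 1 / real (Suc n) \<in> S" using S by auto
      then have "Inf S \<le> Inf S - 1 / real (Suc n)" by (rule cInf_lower[OF _ bdd])
      then show False by simp
    qed
    then show ?thesis by (intro LIMSEQ_le_const2[OF t2]) auto
  qed
  show "G0 (Fbar0_inv G0 x) = 1 - x" using ge le by (simp add: Fbar0_inv_def S_def)
qed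

lemma quantile_antimono:
  fixes G0 :: "real \<Rightarrow> real"
  assumes cdf: "cdf_with_density G0" and xy: "0 < x" "x \<le> y" "y < 1"
  shows "Fbar0_inv G0 y \<le> Fbar0_inv G0 x"
proof -
  have x1: "x < 1" and y0: "0 < y" using xy by auto
  have sub: "{t. Fbar0 G0 t \<le> x} \<subseteq> {t. Fbar0 G0 t \<le> y}" using xy by auto
  show ?thesis unfolding Fbar0_inv_def
    by (rule cInf_superset_mono[OF quantile_set(1)[OF cdf xy(1) x1] quantile_set(2)[OF cdf y0 xy(3)] sub])
qed


definition Hc :: "(real \<Rightarrow> real) \<Rightarrow> (real \<Rightarrow> real) \<Rightarrow> real \<Rightarrow> real" where
  "Hc G0 G1 x = (if x \<le> 0 then 0 else if 1 \<le> x then 1 else 1 - G1 (Fbar0_inv G0 x))"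

lemma Hc_bounds:
  assumes "cdf_with_density G1"
  shows "0 \<le> Hc G0 G1 x \<and> Hc G0 G1 x \<le> 1"
  using cdf_facts(2,3)[OF assms] by (auto simp: Hc_def)

lemma Hc_mono:
  assumes c0: "cdf_with_density G0" and c1: "cdf_with_density G1"
  shows "mono (Hc G0 G1)"
proof (rule monoI)
  fix x y :: real assume xy: "x \<le> y"
  note b = cdf_facts(2,3)[OF c1]
  show "Hc G0 G1 x \<le> Hc G0 G1 y"
  proof (cases "x \<le> 0 \<or> 1 \<le> y")
    case True then show ?thesis using b xy by (auto simp: Hc_def)
  next
    case False
    then have x0: "0 < x" and y1: "y < 1" by auto
    have "Fbar0_inv G0 y \<le> Fbar0_inv G0 x" by (rule quantile_antimono[OF c0 x0 xy y1])
    then have "G1 (Fbar0_inv G0 y) \<le> G1 (Fbar0_inv G0 x)" using cdf_facts(1)[OF c1] by (simp add: mono_def)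
    then show ?thesis using x0 y1 xy by (auto simp: Hc_def)
  qed
qed

lemma Dfun_eq:
  assumes c0: "cdf_with_density G0" and x: "0 < x" "x < 1"
  shows "Dfun eps G0 G1 x = (1-eps)*x + eps * Hc G0 G1 x"
proof -
  have eq: "G0 (Fbar0_inv G0 x) = 1 - x" by (rule quantile_set(5)[OF c0 x])
  show ?thesis using x by (simp add: Dfun_def Fbar1_def Hc_def eq algebra_simps)
qed

lemma deriv_Dfun:
  assumes c0: "cdf_with_density G0" and u: "0 < u" "u < 1" and d: "Hc G0 G1 differentiable (at u)"
  shows "deriv (Dfun eps G0 G1) u = (1-eps) + eps * deriv (Hc G0 G1) u"
proof -
  have h: "DERIV (Hc G0 G1) u :> deriv (Hc G0 G1) u" using d DERIV_deriv_iff_real_differentiable by blast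
  have h1: "DERIV (\<lambda>x. (1-eps)*x) u :> (1-eps) * 1" by (rule DERIV_cmult[OF DERIV_ident])
  have h2: "DERIV (\<lambda>x. eps * Hc G0 G1 x) u :> eps * deriv (Hc G0 G1) u" by (rule DERIV_cmult[OF h])
  have "DERIV (\<lambda>x. (1-eps)*x + eps * Hc G0 G1 x) u :> (1-eps) * 1 + eps * deriv (Hc G0 G1) u"
    by (rule DERIV_add[OF h1 h2])
  then have "DERIV (Dfun eps G0 G1) u :> (1-eps) * 1 + eps * deriv (Hc G0 G1) u"
    by (rule has_field_derivative_transform_within_open[where S = "{0<..<1}"]) (use u Dfun_eq[OF c0] in auto)
  then show ?thesis by (simp add: DERIV_imp_deriv)
qed


lemma xlnx_lim: "((\<lambda>u::real. u * ln u) \<longlongrightarrow> 0) (at_right 0)"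
  by real_asymp

lemma K_integral:
  fixes t1 t2 :: real
  assumes t1: "0 < t1" and t2: "0 < t2"
  shows "((\<lambda>u. - ln (u/t2)) has_integral E0 t1 t2) {0..t1}"
proof -
  define F where "F u = u * (1 - ln (u/t2))" for u :: real
  have "((\<lambda>u. - ln (u/t2)) has_integral (F t1 - F 0)) {0..t1}"
  proof (rule fundamental_theorem_of_calculus_interior)
    show "0 \<le> t1" using t1 by simp
    show "continuous_on {0..t1} F"
    proof (rule continuous_on_eq_continuous_within[THEN iffD2], intro ballI)
      fix x assume x: "x \<in> {0..t1}"
      show "continuous (at x within {0..t1}) F"
      proof (cases "x = 0")
        case True
        have ev: "eventually (\<lambda>u. u * (1 + ln t2) - u * ln u = F u) (at_right 0)"
          using eventually_at_right_less[of "0::real"]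
          by eventually_elim (use t2 in \<open>simp add: F_def ln_div algebra_simps\<close>)
        have "((\<lambda>u. u * (1 + ln t2) - u * ln u) \<longlongrightarrow> 0 * (1 + ln t2) - 0) (at_right 0)"
          by (intro tendsto_intros xlnx_lim)
        then have "(F \<longlongrightarrow> 0) (at_right 0)" using tendsto_cong[OF ev] by simp
        then show ?thesis using True t1 by (simp add: continuous_within at_within_Icc_at_right F_def)
      next
        case False
        then have "0 < x" using x by simp
        then have "isCont F x" unfolding F_def using t2 by (intro continuous_intros) auto
        then show ?thesis by (rule continuous_at_imp_continuous_within)
      qed
    qed
    fix x assume x: "x \<in> {0<..<t1}"
    then have x0: "0 < x" by simp
    have "(F has_real_derivative (1 * (1 - ln (x/t2)) + x * (- (1 / t2 / (x/t2))))) (at x)"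
      unfolding F_def using x0 t2 by (intro derivative_eq_intros) auto
    moreover have "1 * (1 - ln (x/t2)) + x * (- (1 / t2 / (x/t2))) = - ln (x/t2)"
      using x0 t2 by (simp add: field_simps)
    ultimately show "(F has_vector_derivative - ln (x/t2)) (at x)"
      by (simp add: has_real_derivative_iff_has_vector_derivative)
  qed
  moreover have "F t1 - F 0 = E0 t1 t2" using t1 t2 by (simp add: F_def E0_def ln_div algebra_simps)
  ultimately show ?thesis by simp
qed


definition hmf :: "(real \<Rightarrow> real) \<Rightarrow> (real \<Rightarrow> real) \<Rightarrow> real \<Rightarrow> real" where
  "hmf G0 G1 = (\<lambda>u. max 0 (lim (\<lambda>n. (Hc G0 G1 (u + 1/Suc n) - Hc G0 G1 u) * Suc n)))"

lemma hmf_facts: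
  assumes c0: "cdf_with_density G0" and c1: "cdf_with_density G1"
  shows "\<And>a b. hmf G0 G1 absolutely_integrable_on {a..b}"
    and "\<And>a b. hmf G0 G1 integrable_on {a..b}"
    and "negligible {x. \<not> Hc G0 G1 differentiable (at x)}"
    and "\<And>u. 0 < u \<Longrightarrow> u < 1 \<Longrightarrow> Hc G0 G1 differentiable (at u) \<Longrightarrow>
            deriv (Dfun eps G0 G1) u = (1-eps) + eps * hmf G0 G1 u"
proof -
  have m: "mono (Hc G0 G1)" by (rule Hc_mono[OF c0 c1])
  have b: "\<And>x. 0 \<le> Hc G0 G1 x \<and> Hc G0 G1 x \<le> 1" by (rule Hc_bounds[OF c1])
  note di = deriv_integrable[OF m b, folded hmf_def]
  show ai: "hmf G0 G1 absolutely_integrable_on {a..b}" for a b by (rule di(4))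
  show "hmf G0 G1 integrable_on {a..b}" for a b using ai[of a b] absolutely_integrable_on_def by blast
  show "negligible {x. \<not> Hc G0 G1 differentiable (at x)}" by (rule mono_differentiable_ae[OF m])
  show "deriv (Dfun eps G0 G1) u = (1-eps) + eps * hmf G0 G1 u"
    if "0 < u" "u < 1" "Hc G0 G1 differentiable (at u)" for u
    using deriv_Dfun[OF c0 that] di(3)[OF that(3)] by (simp add: hmf_def)
qed

lemma uniform_integrability:
  assumes c0: "cdf_with_density G0" and c1: "cdf_with_density G1"
    and t1: "0 < t1" "t1 \<le> 1" and t2: "0 < t2"
  shows "(\<lambda>u. - ln (u/t2) * hmf G0 G1 u) integrable_on {0..t1} \<longleftrightarrow>
         (\<lambda>u. ln u * hmf G0 G1 u) integrable_on {0..1}"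
proof -
  let ?h = "hmf G0 G1"
  note hf = hmf_facts[OF c0 c1]
  have eq: "- ln (u/t2) * ?h u = ln t2 * ?h u - ln u * ?h u" if "u \<in> {0..t1} - {0}" for u
    using that t2 by (simp add: ln_div algebra_simps)
  have hi: "?h integrable_on {0..t1}" by (rule hf(2))
  have step1: "(\<lambda>u. - ln (u/t2) * ?h u) integrable_on {0..t1} \<longleftrightarrow> (\<lambda>u. ln u * ?h u) integrable_on {0..t1}"
  proof
    assume "(\<lambda>u. - ln (u/t2) * ?h u) integrable_on {0..t1}"
    then have "(\<lambda>u. ln t2 * ?h u - (- ln (u/t2) * ?h u)) integrable_on {0..t1}"
      using hi by (intro integrable_diff integrable_on_mult_right)
    then show "(\<lambda>u. ln u * ?h u) integrable_on {0..t1}"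
      by (rule integrable_spike[where S = "{0}"]) (use eq in auto)
  next
    assume "(\<lambda>u. ln u * ?h u) integrable_on {0..t1}"
    then have "(\<lambda>u. ln t2 * ?h u - ln u * ?h u) integrable_on {0..t1}"
      using hi by (intro integrable_diff integrable_on_mult_right)
    then show "(\<lambda>u. - ln (u/t2) * ?h u) integrable_on {0..t1}"
      by (rule integrable_spike[where S = "{0}"]) (use eq in auto)
  qed
  have tail: "(\<lambda>u. ln u * ?h u) integrable_on {t1..1}"
  proof -
    have cont: "continuous_on {t1..1} ln" using t1 by (intro continuous_intros) auto
    have "(\<lambda>u. ln u * ?h u) absolutely_integrable_on {t1..1}"
    proof (rule absolutely_integrable_bounded_measurable_product_real)
      show "ln \<in> borel_measurable (lebesgue_on {t1..1})"
        by (rule continuous_imp_measurable_on_sets_lebesgue[OF cont]) simp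
      show "{t1..1} \<in> sets lebesgue" by simp
      show "bounded (ln ` {t1..1})" by (rule compact_imp_bounded[OF compact_continuous_image[OF cont]]) simp
      show "?h absolutely_integrable_on {t1..1}" by (rule hf(1))
    qed
    then show ?thesis using absolutely_integrable_on_def by blast
  qed
  have step2: "(\<lambda>u. ln u * ?h u) integrable_on {0..t1} \<longleftrightarrow> (\<lambda>u. ln u * ?h u) integrable_on {0..1}"
  proof
    assume "(\<lambda>u. ln u * ?h u) integrable_on {0..t1}"
    then show "(\<lambda>u. ln u * ?h u) integrable_on {0..1}"
      using Henstock_Kurzweil_Integration.integrable_combine[OF _ t1(2) _ tail] t1 by auto
  next
    assume "(\<lambda>u. ln u * ?h u) integrable_on {0..1}"
    then show "(\<lambda>u. ln u * ?h u) integrable_on {0..t1}"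
      by (rule integrable_subinterval_real) (use t1 in auto)
  qed
  show ?thesis using step1 step2 by simp
qed


lemma E1_cases:
  assumes c0: "cdf_with_density G0" and c1: "cdf_with_density G1"
    and eps: "0 < eps" "eps < 1" and t1: "0 < t1" "t1 \<le> 1" and t2: "0 < t2"
  shows "(\<lambda>u. ln u * hmf G0 G1 u) integrable_on {0..1} \<Longrightarrow>
           E1 eps G0 G1 t1 t2 = (1-eps) * E0 t1 t2 + eps * integral {0..t1} (\<lambda>u. - ln (u/t2) * hmf G0 G1 u)"
    and "\<not> (\<lambda>u. ln u * hmf G0 G1 u) integrable_on {0..1} \<Longrightarrow> E1 eps G0 G1 t1 t2 = 0"
proof -
  let ?h = "hmf G0 G1"
  note hf = hmf_facts[OF c0 c1]
  define Z where "Z = {x. \<not> Hc G0 G1 differentiable (at x)} \<union> {0,1}"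
  have negZ: "negligible Z" unfolding Z_def using hf(3) by (intro negligible_Un) auto
  define I where "I u = - ln (u/t2) * deriv (Dfun eps G0 G1) u" for u
  define J where "J u = (1-eps) * (- ln (u/t2)) + eps * (- ln (u/t2) * ?h u)" for u
  have JI: "J u = I u" if "u \<in> {0..t1} - Z" for u
  proof -
    have u: "0 < u" "u < 1" "Hc G0 G1 differentiable (at u)" using that t1 by (auto simp: Z_def)
    have d: "deriv (Dfun eps G0 G1) u = (1-eps) + eps * ?h u" by (rule hf(4)[OF u])
    show ?thesis unfolding I_def J_def d by (simp add: algebra_simps)
  qed
  have E1I: "E1 eps G0 G1 t1 t2 = integral {0..t1} I" unfolding E1_def I_def ..
  have EIJ: "integral {0..t1} I = integral {0..t1} J" by (rule integral_spike[OF negZ JI])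
  have K: "((\<lambda>u. - ln (u/t2)) has_integral E0 t1 t2) {0..t1}" by (rule K_integral[OF t1(1) t2])
  show "E1 eps G0 G1 t1 t2 = (1-eps) * E0 t1 t2 + eps * integral {0..t1} (\<lambda>u. - ln (u/t2) * ?h u)"
    if P: "(\<lambda>u. ln u * hmf G0 G1 u) integrable_on {0..1}"
  proof -
    have Kh: "(\<lambda>u. - ln (u/t2) * ?h u) integrable_on {0..t1}"
      using uniform_integrability[OF c0 c1 t1 t2] P by simp
    have "(J has_integral ((1-eps) * E0 t1 t2 + eps * integral {0..t1} (\<lambda>u. - ln (u/t2) * ?h u))) {0..t1}"
      unfolding J_def
      by (intro has_integral_add has_integral_mult_right K integrable_integral Kh)
    then show ?thesis using E1I EIJ by (simp add: integral_unique)
  qed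
  show "E1 eps G0 G1 t1 t2 = 0" if nP: "\<not> (\<lambda>u. ln u * hmf G0 G1 u) integrable_on {0..1}"
  proof -
    have "\<not> I integrable_on {0..t1}"
    proof
      assume "I integrable_on {0..t1}"
      then have "J integrable_on {0..t1}" by (rule integrable_spike[OF _ negZ JI])
      then have "(\<lambda>u. (1/eps) * (J u - (1-eps) * (- ln (u/t2)))) integrable_on {0..t1}"
        using K by (intro integrable_on_mult_right integrable_diff) (auto simp: has_integral_integrable)
      moreover have "(\<lambda>u. (1/eps) * (J u - (1-eps) * (- ln (u/t2)))) = (\<lambda>u. - ln (u/t2) * ?h u)"
        using eps by (auto simp: J_def field_simps)
      ultimately have "(\<lambda>u. - ln (u/t2) * ?h u) integrable_on {0..t1}" by simp
      then show False using uniform_integrability[OF c0 c1 t1 t2] nP by simp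
    qed
    then show ?thesis using E1I by (simp add: not_integrable_integral)
  qed
qed

lemma maximizers_scale:
  assumes "0 < k1" "0 < k2"
    and "\<forall>t1\<in>{0<..1}. \<forall>t2>0. c_eff eps G0 G1 t1 t2 = k1 * W t1 t2"
    and "\<forall>t1\<in>{0<..1}. \<forall>t2>0. c_eff eps' G0 G1 t1 t2 = k2 * W t1 t2"
  shows "maximizers eps G0 G1 = maximizers eps' G0 G1"
  unfolding maximizers_def using assms by auto


theorem lemma2:
  fixes G0 G1 :: "real \<Rightarrow> real" and eps eps' :: real
  assumes "cdf_with_density G0" and "cdf_with_density G1"
    and "0 < eps" and "eps < 1" and "0 < eps'" and "eps' < 1"
  shows "maximizers eps G0 G1 = maximizers eps' G0 G1"
proof -
  note c0 = assms(1) and c1 = assms(2)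
  define B where "B t1 t2 = integral {0..t1} (\<lambda>u. - ln (u/t2) * hmf G0 G1 u)" for t1 t2 :: real
  define P where "P \<longleftrightarrow> (\<lambda>u. ln u * hmf G0 G1 u) integrable_on {0..1}"
  define W where "W t1 t2 = (if P then (B t1 t2 - E0 t1 t2)\<^sup>2 / V0 t1 t2 else (E0 t1 t2)\<^sup>2 / V0 t1 t2)"
    for t1 t2 :: real
  define \<kappa> where "\<kappa> e = (if P then e\<^sup>2 else 1)" for e :: real
  have form: "\<forall>t1\<in>{0<..1}. \<forall>t2>0. c_eff e G0 G1 t1 t2 = \<kappa> e * W t1 t2" if e: "0 < e" "e < 1" for e
  proof (intro ballI allI impI)
    fix t1 t2 :: real assume t1: "t1 \<in> {0<..1}" and t2: "0 < t2"
    have t1': "0 < t1" "t1 \<le> 1" using t1 by auto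
    show "c_eff e G0 G1 t1 t2 = \<kappa> e * W t1 t2"
    proof (cases P)
      case True
      have "E1 e G0 G1 t1 t2 = (1-e) * E0 t1 t2 + e * B t1 t2"
        using E1_cases(1)[OF c0 c1 e t1' t2] True by (simp add: P_def B_def)
      then have "E1 e G0 G1 t1 t2 - E0 t1 t2 = e * (B t1 t2 - E0 t1 t2)" by (simp add: algebra_simps)
      then show ?thesis using True by (simp add: c_eff_def W_def \<kappa>_def power_mult_distrib)
    next
      case False
      have "E1 e G0 G1 t1 t2 = 0" using E1_cases(2)[OF c0 c1 e t1' t2] False by (simp add: P_def)
      then show ?thesis using False by (simp add: c_eff_def W_def \<kappa>_def)
    qed
  qed
  have k: "0 < \<kappa> e" if "0 < e" for e using that by (simp add: \<kappa>_def)
  show ?thesis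
    by (rule maximizers_scale[OF k[OF assms(3)] k[OF assms(5)] form[OF assms(3,4)] form[OF assms(5,6)]])
qed


end
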